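(* Let $A_X,A_Z,B_X,B_Z\subseteq\mathbb{F}_q^n$ be linear codes with $A_X^\perp\subseteq A_Z$ and $B_X^\perp\subseteq B_Z$ (so that $\mathrm{CSS}(A_X,A_Z)$ and $\mathrm{CSS}(B_X,B_Z)$ are CSS codes). Define \[ C_X=(A_X\cap B_X)+B_Z^\perp,\qquad C_Z=(A_Z\cap B_Z)+B_X^\perp . \] Then \[ C_X^\perp=(A_X^\perp\cap B_Z)+B_X^\perp,\qquad C_Z^\perp=(A_Z^\perp\cap B_X)+B_Z^\perp, \] and $C_X^\perp\subseteq C_Z$, so that $\mathrm{CSS}(C_X,C_Z)$ is a well-defined CSS code.
   Context: $q$ is a prime power. For $C\subseteq\mathbb{F}_q^n$ linear, $C^\perp=\{y\in\mathbb{F}_q^n: \sum_i y_ic_i=0\ \forall c\in C\}$. For linear codes $C_X,C_Z$ with $C_X^\perp\subseteq C_Z$, $\mathrm{CSS}(C_X,C_Z)=\mathrm{span}\{\sum_{y\in C_X^\perp}|x+y\rangle: x\in C_Z\}\subseteq(\mathbb{C}^q)^{\otimes n}$. *)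

theory Defs
  imports "HOL-Analysis.Analysis"
begin

text \<open>Vectors in F_q^n are modelled as 'a^'n, where 'a is a finite field (so its
cardinality q is a prime power) and 'n is a finite index type with CARD('n) = n.\<close>

definition linear_code :: "('a::field ^ 'n) set \<Rightarrow> bool" where
  "linear_code C \<longleftrightarrow> 0 \<in> C \<and> (\<forall>x\<in>C. \<forall>y\<in>C. x + y \<in> C) \<and> (\<forall>c. \<forall>x\<in>C. c *s x \<in> C)"

definition dual_code :: "('a::field ^ 'n::finite) set \<Rightarrow> ('a ^ 'n) set" where
  "dual_code C = {y. \<forall>c\<in>C. (\<Sum>i\<in>UNIV. y $ i * c $ i) = 0}"

definition code_sum :: "('a::field ^ 'n) set \<Rightarrow> ('a ^ 'n) set \<Rightarrow> ('a ^ 'n) set" where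
  "code_sum A B = {a + b | a b. a \<in> A \<and> b \<in> B}"

end

theory Submission
  imports Defs
begin

lemma lc_subspace: "linear_code C \<Longrightarrow> vec.subspace C"
  unfolding linear_code_def vec.subspace_def by blast

lemma dual_lc: "linear_code (dual_code C)"
  unfolding linear_code_def dual_code_def
  by (auto simp: algebra_simps sum.distrib sum_distrib_left[symmetric] mult.assoc)

lemma sum_lc:
  assumes "linear_code A" "linear_code B"
  shows "linear_code (code_sum A B)"
  unfolding linear_code_def code_sum_def
proof (intro conjI ballI allI)
  show "0 \<in> {a + b |a b. a \<in> A \<and> b \<in> B}" using assms unfolding linear_code_def by force
next
  fix x y assume "x \<in> {a + b |a b. a \<in> A \<and> b \<in> B}" "y \<in> {a + b |a b. a \<in> A \<and> b \<in> B}"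
  then obtain a b a' b' where "x = a + b" "y = a' + b'" "a \<in> A" "b \<in> B" "a' \<in> A" "b' \<in> B" by blast
  moreover have "x + y = (a + a') + (b + b')" using calculation by (simp add: algebra_simps)
  ultimately show "x + y \<in> {a + b |a b. a \<in> A \<and> b \<in> B}" using assms unfolding linear_code_def by blast
next
  fix c x assume "x \<in> {a + b |a b. a \<in> A \<and> b \<in> B}"
  then obtain a b where "x = a + b" "a \<in> A" "b \<in> B" by blast
  moreover have "c *s x = c *s a + c *s b" using calculation by (simp add: vector_add_ldistrib)
  ultimately show "c *s x \<in> {a + b |a b. a \<in> A \<and> b \<in> B}" using assms unfolding linear_code_def by blast
qed

lemma dual_anti: "A \<subseteq> B \<Longrightarrow> dual_code B \<subseteq> dual_code A"
  unfolding dual_code_def by blast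

lemma dual_dual_sub: "C \<subseteq> dual_code (dual_code C)"
  unfolding dual_code_def by (auto simp: mult.commute)

lemma separate:
  fixes C :: "('a::field ^ 'n::finite) set"
  assumes "linear_code C" "y \<notin> C"
  shows "\<exists>z\<in>dual_code C. (\<Sum>i\<in>UNIV. z $ i * y $ i) \<noteq> 0"
proof -
  interpret P: vector_space_pair "(*s) :: 'a \<Rightarrow> 'a^'n \<Rightarrow> 'a^'n" "(*) :: 'a \<Rightarrow> 'a \<Rightarrow> 'a" ..
  have sub: "vec.subspace C" using assms(1) by (rule lc_subspace)
  obtain B where B: "B \<subseteq> C" "vec.independent B" "C \<subseteq> vec.span B" "card B = vec.dim C"
    using vec.basis_exists[of C] by blast
  have spanB: "vec.span B = C"
    using B sub vec.span_minimal by (metis subset_antisym)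
  have yn: "y \<notin> vec.span B" using spanB assms(2) by simp
  have ind: "vec.independent (insert y B)" using vec.independent_insertI[OF yn B(2)] .
  define f where "f = P.construct (insert y B) (\<lambda>b. if b = y then (1::'a) else 0)"
  have lin: "Vector_Spaces.linear (*s) (*) f" unfolding f_def by (rule P.linear_construct[OF ind])
  have fy: "f y = 1" unfolding f_def by (subst P.construct_basis[OF ind]) auto
  have fB: "f b = 0" if "b \<in> B" for b
  proof -
    have "b \<noteq> y" using that yn vec.span_base by blast
    then show ?thesis unfolding f_def using that by (subst P.construct_basis[OF ind]) auto
  qed
  have fC: "f x = 0" if "x \<in> C" for x
    using P.linear_eq_0_on_span[OF lin fB] that spanB by blast
  define z where "z = (\<chi> i. f (axis i 1))"
  have fx: "f x = (\<Sum>i\<in>UNIV. z $ i * x $ i)" for x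
  proof -
    have "f x = f (\<Sum>i\<in>UNIV. x $ i *s axis i 1)" by (simp add: basis_expansion)
    also have "\<dots> = (\<Sum>i\<in>UNIV. x $ i * f (axis i 1))"
    proof -
      interpret L: Vector_Spaces.linear "(*s) :: 'a \<Rightarrow> 'a^'n \<Rightarrow> 'a^'n" "(*) :: 'a \<Rightarrow> 'a \<Rightarrow> 'a" f by (rule lin)
      show ?thesis by (simp add: L.sum L.scale)
    qed
    finally show ?thesis by (simp add: z_def mult.commute)
  qed
  have "z \<in> dual_code C" unfolding dual_code_def using fC fx by auto
  moreover have "(\<Sum>i\<in>UNIV. z $ i * y $ i) \<noteq> 0" using fy fx[of y] by simp
  ultimately show ?thesis by blast
qed


lemma dual_dual:
  fixes C :: "('a::field ^ 'n::finite) set"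
  assumes "linear_code C"
  shows "dual_code (dual_code C) = C"
proof
  show "C \<subseteq> dual_code (dual_code C)" by (rule dual_dual_sub)
  show "dual_code (dual_code C) \<subseteq> C"
  proof
    fix y assume y: "y \<in> dual_code (dual_code C)"
    show "y \<in> C"
    proof (rule ccontr)
      assume "y \<notin> C"
      then obtain z where z: "z \<in> dual_code C" "(\<Sum>i\<in>UNIV. z $ i * y $ i) \<noteq> 0"
        using separate[OF assms] by blast
      have "(\<Sum>i\<in>UNIV. y $ i * z $ i) = 0" using y z(1) unfolding dual_code_def by blast
      then show False using z(2) by (simp add: mult.commute)
    qed
  qed
qed

lemma dual_sum:
  fixes A B :: "('a::field ^ 'n::finite) set"
  assumes "0 \<in> A" "0 \<in> B"
  shows "dual_code (code_sum A B) = dual_code A \<inter> dual_code B"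
proof
  have "A \<subseteq> code_sum A B" unfolding code_sum_def using assms(2) by force
  moreover have "B \<subseteq> code_sum A B" unfolding code_sum_def using assms(1) by force
  ultimately show "dual_code (code_sum A B) \<subseteq> dual_code A \<inter> dual_code B"
    using dual_anti by blast
  show "dual_code A \<inter> dual_code B \<subseteq> dual_code (code_sum A B)"
  proof
    fix y assume y: "y \<in> dual_code A \<inter> dual_code B"
    show "y \<in> dual_code (code_sum A B)" unfolding dual_code_def
    proof
      show "\<forall>c\<in>code_sum A B. (\<Sum>i\<in>UNIV. y $ i * c $ i) = 0"
      proof
        fix c assume "c \<in> code_sum A B"
        then obtain a b where ab: "c = a + b" "a \<in> A" "b \<in> B" unfolding code_sum_def by blast
        have "(\<Sum>i\<in>UNIV. y $ i * c $ i) = (\<Sum>i\<in>UNIV. y $ i * a $ i) + (\<Sum>i\<in>UNIV. y $ i * b $ i)"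
          using ab(1) by (simp add: distrib_left sum.distrib)
        also have "\<dots> = 0" using y ab unfolding dual_code_def by simp
        finally show "(\<Sum>i\<in>UNIV. y $ i * c $ i) = 0" .
      qed
    qed
  qed
qed

lemma dual_inter:
  fixes A B :: "('a::field ^ 'n::finite) set"
  assumes "linear_code A" "linear_code B"
  shows "dual_code (A \<inter> B) = code_sum (dual_code A) (dual_code B)"
proof -
  have "0 \<in> dual_code A" "0 \<in> dual_code B" using dual_lc unfolding linear_code_def by blast+
  then have "dual_code (code_sum (dual_code A) (dual_code B)) = A \<inter> B"
    using dual_sum dual_dual assms by metis
  then have "dual_code (A \<inter> B) = dual_code (dual_code (code_sum (dual_code A) (dual_code B)))"
    by simp
  also have "\<dots> = code_sum (dual_code A) (dual_code B)"
    by (rule dual_dual[OF sum_lc[OF dual_lc dual_lc]])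
  finally show ?thesis .
qed

lemma modular:
  fixes P Q Z :: "('a::field ^ 'n::finite) set"
  assumes "linear_code Z" "Q \<subseteq> Z"
  shows "code_sum P Q \<inter> Z = code_sum (P \<inter> Z) Q"
proof
  show "code_sum P Q \<inter> Z \<subseteq> code_sum (P \<inter> Z) Q"
  proof
    fix x assume "x \<in> code_sum P Q \<inter> Z"
    then obtain p q where pq: "x = p + q" "p \<in> P" "q \<in> Q" "x \<in> Z" unfolding code_sum_def by blast
    have lz: "\<forall>c. \<forall>x\<in>Z. c *s x \<in> Z" "\<forall>x\<in>Z. \<forall>y\<in>Z. x + y \<in> Z"
      using assms(1) unfolding linear_code_def by simp_all
    have qZ: "q \<in> Z" using pq(3) assms(2) by (rule subsetD[rotated])
    have "(-1) *s q \<in> Z" by (rule lz(1)[rule_format, OF qZ])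
    then have "x + (-1) *s q \<in> Z" by (rule lz(2)[rule_format, OF pq(4)])
    moreover have "x + (-1) *s q = p" unfolding pq(1) by (simp add: vec_eq_iff)
    ultimately show "x \<in> code_sum (P \<inter> Z) Q" using pq unfolding code_sum_def by blast
  qed
  show "code_sum (P \<inter> Z) Q \<subseteq> code_sum P Q \<inter> Z"
  proof
    fix x assume "x \<in> code_sum (P \<inter> Z) Q"
    then obtain p q where pq: "x = p + q" "p \<in> P" "p \<in> Z" "q \<in> Q" unfolding code_sum_def by blast
    have "q \<in> Z" using pq assms(2) by blast
    then have "x \<in> Z" using pq assms(1) unfolding linear_code_def by blast
    moreover have "x \<in> code_sum P Q" using pq unfolding code_sum_def by blast
    ultimately show "x \<in> code_sum P Q \<inter> Z" by blast
  qed
qed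

theorem lemma5p4:
  fixes AX AZ BX BZ :: "('a::{field,finite} ^ 'n::finite) set"
  assumes "linear_code AX" "linear_code AZ" "linear_code BX" "linear_code BZ"
    and "dual_code AX \<subseteq> AZ" and "dual_code BX \<subseteq> BZ"
  defines "CX \<equiv> code_sum (AX \<inter> BX) (dual_code BZ)"
    and "CZ \<equiv> code_sum (AZ \<inter> BZ) (dual_code BX)"
  shows "dual_code CX = code_sum (dual_code AX \<inter> BZ) (dual_code BX)
         \<and> dual_code CZ = code_sum (dual_code AZ \<inter> BX) (dual_code BZ)
         \<and> dual_code CX \<subseteq> CZ"
proof -
  have z1: "0 \<in> AX \<inter> BX" "0 \<in> AZ \<inter> BZ" using assms(1-4) unfolding linear_code_def by simp_all
  have z2: "0 \<in> dual_code BX" "0 \<in> dual_code BZ" using dual_lc unfolding linear_code_def by blast+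
  have bz: "dual_code BZ \<subseteq> BX"
    using dual_anti[OF assms(6)] dual_dual[OF assms(3)] by simp
  have e1: "dual_code CX = code_sum (dual_code AX \<inter> BZ) (dual_code BX)"
  proof -
    have "dual_code CX = dual_code (AX \<inter> BX) \<inter> BZ"
      unfolding CX_def using dual_sum[OF z1(1) z2(2)] dual_dual[OF assms(4)] by simp
    also have "\<dots> = code_sum (dual_code AX) (dual_code BX) \<inter> BZ"
      using dual_inter[OF assms(1,3)] by simp
    also have "\<dots> = code_sum (dual_code AX \<inter> BZ) (dual_code BX)"
      by (rule modular[OF assms(4,6)])
    finally show ?thesis .
  qed
  have e2: "dual_code CZ = code_sum (dual_code AZ \<inter> BX) (dual_code BZ)"
  proof -
    have "dual_code CZ = dual_code (AZ \<inter> BZ) \<inter> BX"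
      unfolding CZ_def using dual_sum[OF z1(2) z2(1)] dual_dual[OF assms(3)] by simp
    also have "\<dots> = code_sum (dual_code AZ) (dual_code BZ) \<inter> BX"
      using dual_inter[OF assms(2,4)] by simp
    also have "\<dots> = code_sum (dual_code AZ \<inter> BX) (dual_code BZ)"
      by (rule modular[OF assms(3) bz])
    finally show ?thesis .
  qed
  have "code_sum (dual_code AX \<inter> BZ) (dual_code BX) \<subseteq> CZ"
  proof
    fix x assume "x \<in> code_sum (dual_code AX \<inter> BZ) (dual_code BX)"
    then obtain p q where pq: "x = p + q" "p \<in> dual_code AX" "p \<in> BZ" "q \<in> dual_code BX"
      unfolding code_sum_def by blast
    have "p \<in> AZ" using pq assms(5) by blast
    then show "x \<in> CZ" unfolding CZ_def code_sum_def using pq by blast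
  qed
  with e1 e2 show ?thesis by simp
qed

end
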